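(* Let $\tau_2\ge 2$, $b>\tau_2$, and $\epsilon>0$ be such that \[\delta:=\frac{b(1-\epsilon)-\tau_2(1+\epsilon)^2}{\tau_2(b-1)(1+\epsilon)}\] satisfies $\delta-\epsilon>0$, and let $C_\epsilon>0$. Then there exists $M_*$ (depending on $\epsilon,b,\tau_2,C_\epsilon$) such that the following holds whenever $M\ge M_*$ and $M':=M^{b}$. Let $F,G:\mathbb{Z}\to\mathbb{C}$ satisfy \begin{align*} F(0)&=1, \qquad F(s)=0\ \text{ if }1\le|s|<M',\\ |F(s)|&\le C_\epsilon M'^{-1+\epsilon}\ \text{ if }M'\le|s|\le M'^{\tau_2(1+\epsilon/2)},\\ |F(s)|&\le\exp\big(-|s/M'^{\tau_2}|^{1/2}\big)\ \text{ if }|s|\ge M'^{\tau_2(1+\epsilon/2)}, \end{align*} and \begin{align*} |G(0)|&\le2,\qquad |G(s)|\le 2|s|^{-\delta+\epsilon}\ \text{ if }0<|s|\le M^{\tau_2(1+\epsilon)},\\ |G(s)|&\le\exp\big(-\tfrac12|s/M^{\tau_2}|^{1/2}\big)\ \text{ if }|s|\ge M^{\tau_2(1+\epsilon)}. \end{align*} Then, with $F*G(s)=\sum_{t\in\mathbb{Z}}F(t)G(s-t)$: (a) $|F*G(s)-G(s)|\le M'^{-\delta}$ if $|s|\le M^{\tau_2(1+\epsilon)}$; (b) $|F*G(s)|\le|s|^{-\delta+\epsilon}$ if $M^{\tau_2(1+\epsilon)}<|s|\le M'^{\tau_2(1+\epsilon)}$; (c) $|F*G(s)|\le\exp\big(-\tfrac12|s/M'^{\tau_2}|^{1/2}\big)$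 if $|s|>M'^{\tau_2(1+\epsilon)}$. *)

theory Defs
  imports "HOL-Analysis.Analysis"
begin

definition zconv :: "(int \<Rightarrow> complex) \<Rightarrow> (int \<Rightarrow> complex) \<Rightarrow> int \<Rightarrow> complex" where
  "zconv F G s = (\<Sum>\<^sub>\<infinity> t\<in>(UNIV::int set). F t * G (s - t))"

end

theory Submission
  imports Defs "HOL-Real_Asymp.Real_Asymp"
begin


lemma pow_step:
  fixes a k :: real
  assumes "0 < a" "a < 1" "0 \<le> k"
  shows "(1-a) * (k+1) powr (-a) \<le> (k+1) powr (1-a) - k powr (1-a)"
proof (cases "k = 0")
  case True
  then show ?thesis using assms by simp
next
  case False
  hence k: "k > 0" using assms by simp
  have Y: "k powr (1-a) * (k+1) powr a \<le> (1-a)*k + a*(k+1)"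
    using Youngs_inequality_0[of "1-a" a k "k+1"] assms k by simp
  have e1: "(k+1) powr a * (k+1) powr (-a) = 1"
    using k by (simp add: powr_add[symmetric])
  have e2: "(k+1) * (k+1) powr (-a) = (k+1) powr (1-a)"
    using k by (simp add: powr_diff powr_minus divide_simps)
  have "k powr (1-a) = k powr (1-a) * (k+1) powr a * (k+1) powr (-a)"
    using e1 by (simp add: mult.assoc)
  also have "\<dots> \<le> ((1-a)*k + a*(k+1)) * (k+1) powr (-a)"
    using Y by (intro mult_right_mono) auto
  also have "\<dots> = (k+1) * (k+1) powr (-a) - (1-a) * (k+1) powr (-a)"
    by (simp add: algebra_simps)
  also have "\<dots> = (k+1) powr (1-a) - (1-a) * (k+1) powr (-a)"
    using e2 by simp
  finally show ?thesis by simp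
qed

definition G0 :: "real \<Rightarrow> int \<Rightarrow> real" where
  "G0 a u = (if u = 0 then 2 else 2 * real_of_int \<bar>u\<bar> powr (-a))"

lemma G0_sum:
  assumes "0 < a" "a < 1"
  shows "(\<Sum>u\<in>{-int k..int k}. G0 a u) \<le> 2 + 4 * real k powr (1-a) / (1-a)"
proof (induction k)
  case 0
  then show ?case by (simp add: G0_def)
next
  case (Suc k)
  have set: "{-int (Suc k)..int (Suc k)} = insert (int k + 1) (insert (- int k - 1) {-int k..int k})"
    by auto
  have "(\<Sum>u\<in>{-int (Suc k)..int (Suc k)}. G0 a u)
      = G0 a (int k + 1) + G0 a (- int k - 1) + (\<Sum>u\<in>{-int k..int k}. G0 a u)"
    unfolding set by simp
  also have "G0 a (int k + 1) = 2 * (real k + 1) powr (-a)"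
    unfolding G0_def by simp
  also have "G0 a (- int k - 1) = 2 * (real k + 1) powr (-a)"
    unfolding G0_def by (simp add: add.commute)
  also have "2 * (real k + 1) powr (-a) + 2 * (real k + 1) powr (-a) + (\<Sum>u\<in>{-int k..int k}. G0 a u)
     \<le> 4 * (real k + 1) powr (-a) + (2 + 4 * real k powr (1-a) / (1-a))"
    using Suc by simp
  also have "\<dots> \<le> 2 + 4 * real (Suc k) powr (1-a) / (1-a)"
  proof -
    have "(1-a) * (real k+1) powr (-a) \<le> (real k+1) powr (1-a) - real k powr (1-a)"
      using pow_step[of a "real k"] assms by simp
    hence "(real k+1) powr (-a) \<le> ((real k+1) powr (1-a) - real k powr (1-a)) / (1-a)"
      using assms by (simp add: field_simps)
    hence "4 * (real k+1) powr (-a) \<le> 4 * ((real k+1) powr (1-a)) / (1-a) - 4 * (real k powr (1-a)) / (1-a)"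
      by (simp add: diff_divide_distrib)
    moreover have "real (Suc k) = real k + 1" by simp
    ultimately show ?thesis by (simp only:)
  qed
  finally show ?case .
qed



definition W :: "int \<Rightarrow> real" where "W t = 1 / (1 + (real_of_int t)^2)"

lemma W_pos: "W t > 0" unfolding W_def by (simp add: add_pos_nonneg)

lemma W_summable: "W summable_on UNIV"
proof -
  have s1: "summable (\<lambda>n::nat. W (int n))"
  proof (rule summable_comparison_test')
    show "summable (\<lambda>n::nat. inverse (real n ^ 2))"
      by (rule inverse_power_summable) auto
    show "norm (W (int n)) \<le> inverse (real n ^ 2)" if "n \<ge> 1" for n
      using that W_pos[of "int n"] by (simp add: W_def field_simps)
  qed
  have s2: "summable (\<lambda>n::nat. W (- int n - 1))"
  proof (rule summable_comparison_test')
    show "summable (\<lambda>n::nat. inverse (real n ^ 2))"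
      by (rule inverse_power_summable) auto
    show "norm (W (- int n - 1)) \<le> inverse (real n ^ 2)" if "n \<ge> 1" for n
    proof -
      have "real n ^ 2 \<le> 1 + (real n + 1)^2" by (simp add: power2_eq_square algebra_simps)
      moreover have "(real_of_int (- int n - 1))^2 = (real n + 1)^2"
        by (simp add: power2_eq_square algebra_simps)
      ultimately show ?thesis using that W_pos[of "- int n - 1"]
        by (simp add: W_def field_simps)
    qed
  qed
  have a: "W summable_on (int ` UNIV)"
    using s1 W_pos by (subst summable_on_reindex) (auto simp: o_def summable_on_UNIV_nonneg_real_iff less_imp_le)
  have b: "W summable_on ((\<lambda>n. - int n - 1) ` UNIV)"
    using s2 W_pos by (subst summable_on_reindex) (auto simp: inj_on_def o_def summable_on_UNIV_nonneg_real_iff less_imp_le)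
  have u: "UNIV = int ` UNIV \<union> (\<lambda>n. - int n - 1) ` UNIV"
  proof -
    have "x \<in> int ` UNIV \<union> (\<lambda>n. - int n - 1) ` UNIV" for x
    proof (cases "x \<ge> 0")
      case True thus ?thesis by (metis UNIV_I UnI1 image_eqI nonneg_int_cases)
    next
      case False
      hence "x = - int (nat (-x-1)) - 1" by simp
      thus ?thesis by blast
    qed
    thus ?thesis by blast
  qed
  show ?thesis
    by (subst u, rule summable_on_Un_disjoint[OF a b]) auto
qed

definition SW :: real where "SW = infsum W UNIV"

lemma SW_ge1: "SW \<ge> 1"
proof -
  have "infsum W {0} \<le> infsum W UNIV"
    by (rule infsum_mono_neutral) (auto simp: W_summable less_imp_le[OF W_pos])
  thus ?thesis by (simp add: SW_def W_def)
qed

lemma bound_lemma: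
  fixes f :: "int \<Rightarrow> complex"
  assumes "finite D" "\<And>t. t \<in> D \<Longrightarrow> norm (f t) \<le> h t"
    "\<And>t. t \<notin> D \<Longrightarrow> norm (f t) \<le> c * W t" "c \<ge> 0"
  shows "f summable_on UNIV \<and> norm (infsum f UNIV) \<le> sum h D + c * SW"
proof -
  define g1 where "g1 t = (if t \<in> D then h t else 0)" for t
  define g where "g t = g1 t + c * W t" for t
  have g1s: "g1 summable_on UNIV"
  proof -
    have "g1 summable_on D" using assms(1) by simp
    thus ?thesis by (rule summable_on_cong_neutral[THEN iffD1, rotated -1]) (auto simp: g1_def)
  qed
  have g1i: "infsum g1 UNIV = sum h D"
  proof -
    have "infsum g1 UNIV = infsum g1 D"
      by (rule infsum_cong_neutral) (auto simp: g1_def)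
    also have "\<dots> = sum h D" using assms(1) by (simp add: g1_def)
    finally show ?thesis .
  qed
  have Ws: "(\<lambda>t. c * W t) summable_on UNIV"
    using W_summable by (rule summable_on_cmult_right)
  have gs: "g summable_on UNIV" unfolding g_def
    using g1s Ws by (rule summable_on_add)
  have le: "norm (f t) \<le> g t" for t
  proof (cases "t \<in> D")
    case True thus ?thesis using assms(2)[of t] assms(4) W_pos[of t]
      by (simp add: g_def g1_def add_increasing2)
  next
    case False thus ?thesis using assms(3)[of t] by (simp add: g_def g1_def)
  qed
  have gn: "g t \<ge> 0" for t using le[of t] norm_ge_zero order_trans by blast
  have abs: "Infinite_Sum.abs_summable_on f UNIV"
    by (rule summable_on_comparison_test[OF gs]) (use le in auto)
  have "norm (infsum f UNIV) \<le> infsum (\<lambda>t. norm (f t)) UNIV"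
    by (rule norm_infsum_bound[OF abs])
  also have "\<dots> \<le> infsum g UNIV"
    by (rule infsum_mono) (use abs gs le in auto)
  also have "infsum g UNIV = sum h D + c * SW"
    unfolding g_def SW_def using g1s Ws
    by (simp add: infsum_add g1i infsum_cmult_right W_summable)
  finally show ?thesis using abs abs_summable_summable by blast
qed



lemma card_int_ball:
  fixes s :: int and R :: real
  assumes "R \<ge> 0"
  shows "finite {t::int. real_of_int \<bar>s - t\<bar> < R}"
    "real (card {t::int. real_of_int \<bar>s - t\<bar> < R}) \<le> 2*R + 1"
proof -
  define k where "k = \<lfloor>R\<rfloor>"
  have sub: "{t::int. real_of_int \<bar>s - t\<bar> < R} \<subseteq> {s - k .. s + k}"
  proof
    fix t assume "t \<in> {t::int. real_of_int \<bar>s - t\<bar> < R}"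
    hence "real_of_int \<bar>s - t\<bar> < R" by simp
    hence "\<bar>s - t\<bar> \<le> k" unfolding k_def by linarith
    thus "t \<in> {s - k .. s + k}" by auto
  qed
  show "finite {t::int. real_of_int \<bar>s - t\<bar> < R}" using sub finite_subset by blast
  have "card {t::int. real_of_int \<bar>s - t\<bar> < R} \<le> card {s - k .. s + k}"
    by (rule card_mono[OF _ sub]) simp
  also have "card {s - k .. s + k} = nat (2*k + 1)" by simp
  finally have "real (card {t::int. real_of_int \<bar>s - t\<bar> < R}) \<le> real (nat (2*k+1))" by linarith
  also have "\<dots> = 2 * real_of_int k + 1" using assms unfolding k_def by simp
  also have "\<dots> \<le> 2*R+1" unfolding k_def by linarith
  finally show "real (card {t::int. real_of_int \<bar>s - t\<bar> < R}) \<le> 2*R + 1" .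
qed

lemma G0_sum_ball:
  fixes s :: int and R a :: real
  assumes "R \<ge> 0" "0 < a" "a < 1"
  shows "(\<Sum>t\<in>{t::int. real_of_int \<bar>s - t\<bar> < R}. G0 a (s - t)) \<le> 2 + 4 * R powr (1-a) / (1-a)"
proof -
  define k where "k = nat \<lfloor>R\<rfloor>"
  have G0nn: "G0 a u \<ge> 0" for u by (simp add: G0_def)
  have "(\<Sum>t\<in>{t::int. real_of_int \<bar>s - t\<bar> < R}. G0 a (s - t))
      = (\<Sum>u\<in>(\<lambda>t. s - t) ` {t::int. real_of_int \<bar>s - t\<bar> < R}. G0 a u)"
    by (subst sum.reindex) (auto simp: inj_on_def)
  also have "\<dots> \<le> (\<Sum>u\<in>{- int k .. int k}. G0 a u)"
  proof (rule sum_mono2)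
    show "(\<lambda>t. s - t) ` {t::int. real_of_int \<bar>s - t\<bar> < R} \<subseteq> {- int k..int k}"
    proof
      fix u assume "u \<in> (\<lambda>t. s - t) ` {t::int. real_of_int \<bar>s - t\<bar> < R}"
      then obtain t where "u = s - t" "real_of_int \<bar>s - t\<bar> < R" by auto
      hence "\<bar>u\<bar> \<le> \<lfloor>R\<rfloor>" by linarith
      thus "u \<in> {- int k..int k}" unfolding k_def using assms by auto
    qed
  qed (auto simp: G0nn)
  also have "\<dots> \<le> 2 + 4 * real k powr (1-a) / (1-a)" by (rule G0_sum[OF assms(2,3)])
  also have "\<dots> \<le> 2 + 4 * R powr (1-a) / (1-a)"
  proof -
    have "real k \<le> R" unfolding k_def using assms by linarith
    hence "real k powr (1-a) \<le> R powr (1-a)" using assms by (intro powr_mono2) auto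
    thus ?thesis using assms by (simp add: divide_right_mono)
  qed
  finally show ?thesis .
qed

lemma exp_sqrt_mono:
  assumes "0 \<le> x" "x \<le> y" "0 < B" "0 \<le> c"
  shows "exp (- c * sqrt (y / B)) \<le> exp (- c * sqrt (x / B))"
proof -
  have "sqrt (x/B) \<le> sqrt (y/B)" using assms by (intro real_sqrt_le_mono divide_right_mono) auto
  thus ?thesis using assms by (simp add: mult_left_mono)
qed



lemma y4_exp: assumes "y \<ge> (0::real)" shows "y^4 \<le> 65536 * exp (y/4)"
proof -
  have "y/16 \<le> exp (y/16)" using exp_ge_add_one_self[of "y/16"] by linarith
  hence "(y/16)^4 \<le> exp (y/16)^4" using assms by (intro power_mono) auto
  also have "exp (y/16)^4 = exp (y/4)" by (simp add: exp_of_nat_mult[symmetric])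
  finally show ?thesis by (simp add: power_divide)
qed

lemma E4_from:
  fixes A P r x :: real
  assumes A: "A > 0" and P: "P \<ge> 1" and c: "131072 * A^2 * exp (-(sqrt (P/A))/4) \<le> r" and x: "x \<ge> P"
  shows "exp (-(1/2) * sqrt (x/A)) * (1 + x^2) \<le> r"
proof -
  define y where "y = sqrt (x/A)"
  have y0: "y \<ge> 0" unfolding y_def using A x P by simp
  have xy: "x = A * y^2" unfolding y_def using A x P by simp
  have "1 \<le> x * x" using x P mult_mono[of 1 x 1 x] by simp
  hence "1 + x^2 \<le> 2 * x^2" by (simp add: power2_eq_square)
  also have "\<dots> = 2 * A^2 * y^4" unfolding xy by (simp add: power_mult_distrib power_mult[symmetric])
  also have "\<dots> \<le> 2 * A^2 * (65536 * exp (y/4))" using y4_exp[OF y0] A by (intro mult_left_mono) auto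
  finally have h: "1 + x^2 \<le> 131072 * A^2 * exp (y/4)" by simp
  have "exp (-(1/2) * y) * (1 + x^2) \<le> exp (-(1/2) * y) * (131072 * A^2 * exp (y/4))"
    using h by (intro mult_left_mono) auto
  also have "\<dots> = 131072 * A^2 * exp (- y/4)" by (simp add: exp_add[symmetric] algebra_simps)
  also have "\<dots> \<le> 131072 * A^2 * exp (-(sqrt (P/A))/4)"
  proof -
    have "sqrt (P/A) \<le> y" unfolding y_def using A x by (intro real_sqrt_le_mono divide_right_mono) auto
    thus ?thesis using A by (intro mult_left_mono) auto
  qed
  also have "\<dots> \<le> r" by (rule c)
  finally show ?thesis unfolding y_def .
qed



definition Lc :: "real \<Rightarrow> real \<Rightarrow> real" where "Lc K P = 1 + K * (1 + P^2)"

context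
  fixes F G :: "int \<Rightarrow> complex" and Mp A B N P Q K a :: real
  assumes Bpos: "0 < B" and BA: "B*16 \<le> A" and Npos: "0 < N" and NM: "2*N \<le> Mp"
    and NQ: "N*4 \<le> Q" and PQ: "P*2 \<le> Q" and Kpos: "0 \<le> K" and apos: "0 < a" and a1: "a < 1"
    and Ppos: "0 < P"
    and E4: "\<And>x. x \<ge> P \<Longrightarrow> exp (-(1/2) * sqrt (x/A)) * (1 + x^2) \<le> 1 / (3*SW)"
    and HF0: "F 0 = 1"
    and HF1: "\<And>s. 1 \<le> \<bar>s\<bar> \<and> real_of_int \<bar>s\<bar> < Mp \<Longrightarrow> F s = 0"
    and HF2: "\<And>s. Mp \<le> real_of_int \<bar>s\<bar> \<and> real_of_int \<bar>s\<bar> \<le> P \<Longrightarrow> norm (F s) \<le> K"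
    and HF3: "\<And>s. real_of_int \<bar>s\<bar> \<ge> P \<Longrightarrow> norm (F s) \<le> exp (- sqrt (\<bar>real_of_int s / A\<bar>))"
    and HG0: "norm (G 0) \<le> 2"
    and HG1: "\<And>s. 0 < \<bar>s\<bar> \<and> real_of_int \<bar>s\<bar> \<le> N \<Longrightarrow> norm (G s) \<le> 2 * real_of_int \<bar>s\<bar> powr (-a)"
    and HG2: "\<And>s. real_of_int \<bar>s\<bar> \<ge> N \<Longrightarrow> norm (G s) \<le> exp (- (1/2) * sqrt (\<bar>real_of_int s / B\<bar>))"
begin

lemma Apos: "0 < A" using Bpos BA by linarith

lemma HF3': "real_of_int \<bar>s\<bar> \<ge> P \<Longrightarrow> norm (F s) \<le> exp (- sqrt (real_of_int \<bar>s\<bar> / A))"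
  using HF3[of s] Apos by (simp add: abs_divide)

lemma HG2': "real_of_int \<bar>s\<bar> \<ge> N \<Longrightarrow> norm (G s) \<le> exp (- (1/2) * sqrt (real_of_int \<bar>s\<bar> / B))"
  using HG2[of s] Bpos by (simp add: abs_divide)

abbreviation "L \<equiv> Lc K P"

lemma L1: "L \<ge> 1" using Kpos by (simp add: Lc_def)

lemma Fbound: "norm (F t) \<le> L * W t"
proof -
  have Wp: "W t > 0" by (rule W_pos)
  consider "t = 0" | "t \<noteq> 0" "real_of_int \<bar>t\<bar> < Mp" | "Mp \<le> real_of_int \<bar>t\<bar>" "real_of_int \<bar>t\<bar> \<le> P"
    | "real_of_int \<bar>t\<bar> \<ge> P" by linarith
  thus ?thesis
  proof cases
    case 1 thus ?thesis using HF0 by (simp add: Lc_def W_def Kpos)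
  next
    case 2 thus ?thesis using HF1[of t] L1 Wp by simp
  next
    case 3
    have "t^2 \<le> P^2" using 3 Ppos
      by (metis abs_ge_zero of_int_abs of_int_power power2_abs power_mono)
    hence "real_of_int t ^2 \<le> P^2" by simp
    hence "K \<le> K * (1+P^2) / (1 + real_of_int t^2)" using Kpos
      by (simp add: field_simps add_pos_nonneg mult_left_mono)
    also have "\<dots> \<le> L * W t" unfolding Lc_def W_def by (simp add: divide_right_mono)
    finally show ?thesis using HF2[of t] 3 by simp
  next
    case 4
    have "norm (F t) \<le> exp (- sqrt (real_of_int \<bar>t\<bar> / A))" by (rule HF3'[OF 4])
    also have "\<dots> \<le> exp (-(1/2) * sqrt (real_of_int \<bar>t\<bar> / A))" using Apos by simp
    also have "\<dots> \<le> 1 / (3*SW) / (1 + real_of_int \<bar>t\<bar>^2)"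
      by (subst pos_le_divide_eq) (use E4[OF 4] in \<open>auto simp: add_pos_nonneg\<close>)
    also have "\<dots> \<le> W t"
    proof -
      have "1 + (real_of_int t)^2 \<le> SW * 3 + SW * (3 * (real_of_int t)^2)"
      proof -
        have "(real_of_int t)^2 \<le> SW * (real_of_int t)^2"
          using mult_right_mono[OF SW_ge1, of "(real_of_int t)^2"] by simp
        moreover have "SW * (3 * (real_of_int t)^2) = 3 * (SW * (real_of_int t)^2)" by simp
        ultimately show ?thesis using SW_ge1 zero_le_power2[of "real_of_int t"] by linarith
      qed
      thus ?thesis using SW_ge1 unfolding W_def
        by (simp add: divide_right_mono add_pos_nonneg field_simps)
    qed
    also have "\<dots> \<le> L * W t" using L1 Wp by simp
    finally show ?thesis .
  qed
qed

lemma Fbound2: "t \<noteq> 0 \<Longrightarrow> norm (F t) \<le> max K (exp (- sqrt (P / A)))"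
proof -
  assume t: "t \<noteq> 0"
  consider "real_of_int \<bar>t\<bar> < Mp" | "Mp \<le> real_of_int \<bar>t\<bar>" "real_of_int \<bar>t\<bar> \<le> P"
    | "real_of_int \<bar>t\<bar> \<ge> P" by linarith
  thus ?thesis
  proof cases
    case 1 thus ?thesis using HF1[of t] t Kpos by simp
  next
    case 2 thus ?thesis using HF2[of t] by simp
  next
    case 3
    have "norm (F t) \<le> exp (- sqrt (real_of_int \<bar>t\<bar> / A))" by (rule HF3'[OF 3])
    also have "\<dots> \<le> exp (- 1 * sqrt (P / A))"
      using exp_sqrt_mono[of P "real_of_int \<bar>t\<bar>" A 1] 3 Ppos Apos by simp
    finally show ?thesis by simp
  qed
qed

lemma Gle2: "norm (G u) \<le> 2"
proof -
  consider "u = 0" | "u \<noteq> 0" "real_of_int \<bar>u\<bar> \<le> N" | "real_of_int \<bar>u\<bar> \<ge> N" by linarith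
  thus ?thesis
  proof cases
    case 1 thus ?thesis using HG0 by simp
  next
    case 2
    have "1 \<le> real_of_int \<bar>u\<bar> powr a"
      using 2 apos by (intro ge_one_powr_ge_zero) auto
    hence "real_of_int \<bar>u\<bar> powr (-a) \<le> 1"
      by (simp add: powr_minus_divide divide_le_eq_1)
    thus ?thesis using HG1[of u] 2 by simp
  next
    case 3
    have e: "exp (- (1/2) * sqrt (real_of_int \<bar>u\<bar> / B)) \<le> 1" using Bpos by simp
    show ?thesis using order_trans[OF HG2'[OF 3] e] by simp
  qed
qed

lemma delta_infsum: "(\<lambda>t::int. if t = 0 then c else (0::complex)) summable_on UNIV"
  "infsum (\<lambda>t::int. if t = 0 then c else (0::complex)) UNIV = c"
proof -
  have "(\<lambda>t::int. if t = 0 then c else (0::complex)) summable_on {0}" by simp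
  thus "(\<lambda>t::int. if t = 0 then c else (0::complex)) summable_on UNIV"
    by (rule summable_on_cong_neutral[THEN iffD1, rotated -1]) auto
  have "infsum (\<lambda>t::int. if t = 0 then c else (0::complex)) UNIV = infsum (\<lambda>t::int. if t = 0 then c else (0::complex)) {0}"
    by (rule infsum_cong_neutral) auto
  thus "infsum (\<lambda>t::int. if t = 0 then c else (0::complex)) UNIV = c" by simp
qed

lemma partA:
  assumes Ea: "exp (-(1/2) * sqrt ((Mp/2)/B)) * L * SW \<le> Mp powr (-d)"
    and s: "real_of_int \<bar>s\<bar> \<le> N"
  shows "norm (zconv F G s - G s) \<le> Mp powr (-d)"
proof -
  define f where "f t = F t * G (s - t)" for t
  define f' where "f' t = (if t = 0 then 0 else f t)" for t
  define \<gamma> where "\<gamma> = exp (-(1/2) * sqrt ((Mp/2)/B))"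
  have Lp: "L \<ge> 0" using L1 by simp
  have bnd: "norm (f' t) \<le> (\<gamma> * L) * W t" for t
  proof (cases "t = 0 \<or> real_of_int \<bar>t\<bar> < Mp")
    case True
    hence "f' t = 0" using HF1[of t] by (auto simp: f'_def f_def)
    thus ?thesis using Lp W_pos[of t] by (simp add: \<gamma>_def)
  next
    case False
    hence t: "t \<noteq> 0" "Mp \<le> real_of_int \<bar>t\<bar>" by auto
    have d: "real_of_int \<bar>s - t\<bar> \<ge> Mp/2" using t s NM by linarith
    have d2: "real_of_int \<bar>s - t\<bar> \<ge> N" using d NM by linarith
    have "norm (G (s - t)) \<le> exp (- (1/2) * sqrt (real_of_int \<bar>s - t\<bar> / B))" by (rule HG2'[OF d2])
    also have "\<dots> \<le> \<gamma>" unfolding \<gamma>_def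
      by (rule exp_sqrt_mono) (use d NM Npos Bpos in auto)
    finally have g: "norm (G (s - t)) \<le> \<gamma>" .
    have "norm (f' t) = norm (F t) * norm (G (s - t))" using t by (simp add: f'_def f_def norm_mult)
    also have "\<dots> \<le> (L * W t) * \<gamma>"
      by (rule mult_mono[OF Fbound g]) (use Lp W_pos[of t] in auto)
    finally show ?thesis by (simp add: algebra_simps)
  qed
  have BL: "f' summable_on UNIV \<and> norm (infsum f' UNIV) \<le> 0 + (\<gamma> * L) * SW"
    using bound_lemma[where D="{}" and f=f' and h="\<lambda>_. 0" and c="\<gamma>*L"] bnd Lp
    by (simp add: \<gamma>_def)
  have feq: "f = (\<lambda>t. f' t + (if t = 0 then G s else 0))"
    by (auto simp: f_def f'_def HF0)
  have "zconv F G s = infsum f UNIV" unfolding zconv_def f_def by simp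
  also have "\<dots> = infsum f' UNIV + G s"
    unfolding feq using BL delta_infsum[of "G s"] by (simp add: infsum_add)
  finally have "zconv F G s - G s = infsum f' UNIV" by simp
  hence "norm (zconv F G s - G s) \<le> \<gamma> * L * SW" using BL by simp
  thus ?thesis using Ea unfolding \<gamma>_def by simp
qed

lemma partB:
  assumes Eb1: "exp (-(1/2) * sqrt (N/B)) * L * SW \<le> Q powr (-a) / 3"
    and Eb2: "K * (2 + 4 * N powr (1-a) / (1-a)) \<le> Q powr (-a) / 3"
    and Eb3: "exp (- sqrt (P/A)) * (2 + 4 * N powr (1-a) / (1-a)) \<le> Q powr (-a) / 3"
    and s: "N < real_of_int \<bar>s\<bar>" "real_of_int \<bar>s\<bar> \<le> Q"
  shows "norm (zconv F G s) \<le> real_of_int \<bar>s\<bar> powr (-a)"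
proof -
  define f where "f t = F t * G (s - t)" for t
  define D where "D = {t::int. real_of_int \<bar>s - t\<bar> < N}"
  define K2 where "K2 = max K (exp (- sqrt (P / A)))"
  define \<gamma> where "\<gamma> = exp (-(1/2) * sqrt (N/B))"
  define X where "X = 2 + 4 * N powr (1-a) / (1-a)"
  have Lp: "L \<ge> 0" using L1 by simp
  have K2p: "K2 \<ge> 0" using Kpos by (simp add: K2_def)
  have fin: "finite D" unfolding D_def using card_int_ball(1)[of N s] Npos by simp
  have in_D: "norm (f t) \<le> K2 * G0 a (s - t)" if "t \<in> D" for t
  proof -
    have t0: "t \<noteq> 0" using that s unfolding D_def by auto
    have g: "norm (G (s - t)) \<le> G0 a (s - t)"
    proof (cases "s - t = 0")
      case True thus ?thesis using HG0 by (simp add: G0_def)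
    next
      case False thus ?thesis using HG1[of "s - t"] that by (simp add: G0_def D_def)
    qed
    have "norm (f t) = norm (F t) * norm (G (s - t))" by (simp add: f_def norm_mult)
    also have "\<dots> \<le> K2 * G0 a (s - t)"
      by (rule mult_mono) (use Fbound2[OF t0] g K2p in \<open>auto simp: K2_def\<close>)
    finally show ?thesis .
  qed
  have out_D: "norm (f t) \<le> (\<gamma> * L) * W t" if "t \<notin> D" for t
  proof -
    have d: "real_of_int \<bar>s - t\<bar> \<ge> N" using that unfolding D_def by simp
    have "norm (G (s - t)) \<le> exp (- (1/2) * sqrt (real_of_int \<bar>s - t\<bar> / B))" by (rule HG2'[OF d])
    also have "\<dots> \<le> \<gamma>" unfolding \<gamma>_def
      by (rule exp_sqrt_mono) (use d Npos Bpos in auto)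
    finally have g: "norm (G (s - t)) \<le> \<gamma>" .
    have "norm (f t) = norm (F t) * norm (G (s - t))" by (simp add: f_def norm_mult)
    also have "\<dots> \<le> (L * W t) * \<gamma>"
      by (rule mult_mono[OF Fbound g]) (use Lp W_pos[of t] in auto)
    finally show ?thesis by (simp add: algebra_simps)
  qed
  have BL: "f summable_on UNIV \<and> norm (infsum f UNIV) \<le> sum (\<lambda>t. K2 * G0 a (s - t)) D + (\<gamma> * L) * SW"
    by (rule bound_lemma[OF fin]) (use in_D out_D Lp in \<open>auto simp: \<gamma>_def\<close>)
  have "sum (\<lambda>t. K2 * G0 a (s - t)) D = K2 * sum (\<lambda>t. G0 a (s - t)) D"
    by (simp add: sum_distrib_left)
  also have "\<dots> \<le> K2 * X" unfolding X_def D_def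
    by (rule mult_left_mono[OF G0_sum_ball K2p]) (use Npos apos a1 in auto)
  also have "\<dots> \<le> Q powr (-a) / 3"
  proof -
    have "X \<ge> 0" unfolding X_def using a1 by simp
    thus ?thesis using Eb2 Eb3 unfolding K2_def X_def by (simp add: max_mult_distrib_right)
  qed
  finally have S1: "sum (\<lambda>t. K2 * G0 a (s - t)) D \<le> Q powr (-a) / 3" .
  have "zconv F G s = infsum f UNIV" unfolding zconv_def f_def by simp
  hence "norm (zconv F G s) \<le> Q powr (-a) / 3 + Q powr (-a) / 3"
    using BL S1 Eb1 unfolding \<gamma>_def by (simp add: mult.assoc)
  also have "\<dots> \<le> Q powr (-a)" by simp
  also have "\<dots> \<le> real_of_int \<bar>s\<bar> powr (-a)"
    by (rule powr_mono2') (use apos s Npos in auto)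
  finally show ?thesis .
qed

lemma sqrt_scale: "0 \<le> x \<Longrightarrow> sqrt ((c^2) * x) = \<bar>c\<bar> * sqrt x"
  by (simp add: real_sqrt_mult)

lemma partC:
  assumes Ec1: "6 * (2*N+1) \<le> exp (sqrt (Q/A) / 4)"
    and Ec2: "3 * (2*P+1) * L \<le> exp (sqrt (Q/A) / 2)"
    and s: "real_of_int \<bar>s\<bar> > Q"
  shows "norm (zconv F G s) \<le> exp (- (1/2) * sqrt (\<bar>real_of_int s / A\<bar>))"
proof -
  define f where "f t = F t * G (s - t)" for t
  define D1 where "D1 = {t::int. real_of_int \<bar>s - t\<bar> < N}"
  define D2 where "D2 = {t::int. real_of_int \<bar>0 - t\<bar> < P}"
  define S where "S = real_of_int \<bar>s\<bar>"
  define z where "z = sqrt (S / A)"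
  define T where "T = exp (-(1/2) * z)"
  define e1 where "e1 = exp (-(3/4) * z)"
  define e2 where "e2 = exp (- z)"
  define h where "h t = (if t \<in> D1 then 2 * e1 else L * e2)" for t
  have Lp: "L \<ge> 0" using L1 by simp
  have Spos: "S > 0" "S > Q" using s NQ Npos unfolding S_def by auto
  have Qpos: "Q > 0" using NQ Npos by linarith
  have Tpos: "T > 0" unfolding T_def by simp
  have zQ: "sqrt (Q/A) \<le> z" unfolding z_def
    using Spos Apos by (intro real_sqrt_le_mono divide_right_mono) auto
  have fin1: "finite D1" unfolding D1_def using card_int_ball(1)[of N s] Npos by simp
  have fin2: "finite D2" unfolding D2_def using card_int_ball(1)[of P 0] Ppos by simp
  have c1: "real (card D1) \<le> 2*N+1" unfolding D1_def using card_int_ball(2)[of N s] Npos by simp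
  have c2: "real (card D2) \<le> 2*P+1" unfolding D2_def using card_int_ball(2)[of P 0] Ppos by simp
  have tri: "S \<le> real_of_int \<bar>t\<bar> + real_of_int \<bar>s - t\<bar>" for t
  proof -
    have "\<bar>s\<bar> \<le> \<bar>t\<bar> + \<bar>s - t\<bar>" by arith
    thus ?thesis unfolding S_def by linarith
  qed
  have tri2: "real_of_int \<bar>s - t\<bar> \<ge> S - real_of_int \<bar>t\<bar>" for t
  proof -
    have "\<bar>s\<bar> \<le> \<bar>t\<bar> + \<bar>s - t\<bar>" by arith
    thus ?thesis unfolding S_def by linarith
  qed
  have disj: "D1 \<inter> D2 = {}"
  proof -
    have "t \<notin> D2" if "t \<in> D1" for t
    proof -
      have "real_of_int \<bar>s - t\<bar> < N" using that unfolding D1_def by simp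
      hence "real_of_int \<bar>t\<bar> > S - N" using tri[of t] by linarith
      thus ?thesis unfolding D2_def using Spos NQ PQ by simp
    qed
    thus ?thesis by blast
  qed
  have in1: "norm (f t) \<le> h t" if "t \<in> D1" for t
  proof -
    have "real_of_int \<bar>s - t\<bar> < N" using that unfolding D1_def by simp
    hence tS: "real_of_int \<bar>t\<bar> \<ge> (9/16) * S" using tri[of t] NQ Spos by linarith
    have tP: "real_of_int \<bar>t\<bar> \<ge> P" using tS Spos PQ by linarith
    have "norm (F t) \<le> exp (- sqrt (real_of_int \<bar>t\<bar> / A))" by (rule HF3'[OF tP])
    also have "\<dots> \<le> exp (- 1 * sqrt (((3/4)^2 * S) / A))"
    proof -
      have "(3/4::real)^2 * S \<le> real_of_int \<bar>t\<bar>" using tS by (simp add: power2_eq_square)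
      thus ?thesis using exp_sqrt_mono[of "(3/4)^2 * S" "real_of_int \<bar>t\<bar>" A 1] Spos Apos by simp
    qed
    also have "sqrt (((3/4)^2 * S) / A) = (3/4) * z"
      unfolding z_def using sqrt_scale[of "S/A" "3/4"] Spos Apos by simp
    finally have fF: "norm (F t) \<le> e1" unfolding e1_def by simp
    have "norm (f t) = norm (F t) * norm (G (s - t))" by (simp add: f_def norm_mult)
    also have "\<dots> \<le> e1 * 2" by (rule mult_mono[OF fF Gle2]) (auto simp: e1_def)
    finally show ?thesis using that by (simp add: h_def)
  qed
  have in2: "norm (f t) \<le> h t" if "t \<in> D2" "t \<notin> D1" for t
  proof -
    have "real_of_int \<bar>t\<bar> < P" using that unfolding D2_def by simp
    hence st: "real_of_int \<bar>s - t\<bar> \<ge> S / 2" using tri2[of t] PQ Spos by linarith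
    have stN: "real_of_int \<bar>s - t\<bar> \<ge> N" using st Spos NQ by linarith
    have "norm (G (s - t)) \<le> exp (- (1/2) * sqrt (real_of_int \<bar>s - t\<bar> / B))" by (rule HG2'[OF stN])
    also have "\<dots> \<le> exp (- (1/2) * sqrt ((S/2) / B))"
      by (rule exp_sqrt_mono) (use st Spos Bpos in auto)
    also have "\<dots> \<le> exp (- (1/2) * sqrt (2^2 * (S / A)))"
    proof -
      have "2^2 * (S/A) \<le> (S/2)/B" using BA Bpos Apos Spos by (simp add: field_simps)
      hence "sqrt (2^2 * (S/A)) \<le> sqrt ((S/2)/B)" by (rule real_sqrt_le_mono)
      thus ?thesis by simp
    qed
    also have "sqrt (2^2 * (S / A)) = 2 * z" unfolding z_def
      using sqrt_scale[of "S/A" 2] Spos Apos by simp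
    finally have g: "norm (G (s - t)) \<le> e2" unfolding e2_def by simp
    have fF: "norm (F t) \<le> L"
    proof -
      have "W t \<le> 1" unfolding W_def by (simp add: divide_le_eq_1 add_pos_nonneg)
      hence "L * W t \<le> L" using Lp by (simp add: mult_left_le)
      thus ?thesis using Fbound[of t] by linarith
    qed
    have "norm (f t) = norm (F t) * norm (G (s - t))" by (simp add: f_def norm_mult)
    also have "\<dots> \<le> L * e2" by (rule mult_mono[OF fF g]) (use Lp in \<open>auto simp: e2_def\<close>)
    finally show ?thesis using that by (simp add: h_def)
  qed
  have out: "norm (f t) \<le> (T / (3*SW)) * W t" if "t \<notin> D1 \<union> D2" for t
  proof -
    have tP: "real_of_int \<bar>t\<bar> \<ge> P" using that unfolding D2_def by simp
    have stN: "real_of_int \<bar>s - t\<bar> \<ge> N" using that unfolding D1_def by simp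
    define x where "x = sqrt (real_of_int \<bar>t\<bar> / A)"
    define y where "y = sqrt (real_of_int \<bar>s - t\<bar> / A)"
    have fF: "norm (F t) \<le> exp (- x)" unfolding x_def by (rule HF3'[OF tP])
    have "norm (G (s - t)) \<le> exp (- (1/2) * sqrt (real_of_int \<bar>s - t\<bar> / B))" by (rule HG2'[OF stN])
    also have "\<dots> \<le> exp (- (1/2) * y)"
    proof -
      have "real_of_int \<bar>s - t\<bar> / A \<le> real_of_int \<bar>s - t\<bar> / B"
        using BA Bpos by (intro divide_left_mono) auto
      hence "y \<le> sqrt (real_of_int \<bar>s - t\<bar> / B)" unfolding y_def by (rule real_sqrt_le_mono)
      thus ?thesis by simp
    qed
    finally have g: "norm (G (s - t)) \<le> exp (- (1/2) * y)" .
    have zxy: "z \<le> x + y"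
    proof -
      have "S / A \<le> real_of_int \<bar>t\<bar> / A + real_of_int \<bar>s - t\<bar> / A"
        unfolding S_def using Apos by (simp add: add_divide_distrib[symmetric] divide_right_mono)
      hence "z \<le> sqrt (real_of_int \<bar>t\<bar> / A + real_of_int \<bar>s - t\<bar> / A)"
        unfolding z_def by (rule real_sqrt_le_mono)
      also have "\<dots> \<le> x + y" unfolding x_def y_def
        by (rule sqrt_add_le_add_sqrt) (use Apos in auto)
      finally show ?thesis .
    qed
    have "norm (f t) = norm (F t) * norm (G (s - t))" by (simp add: f_def norm_mult)
    also have "\<dots> \<le> exp (- x) * exp (- (1/2) * y)" by (rule mult_mono[OF fF g]) auto
    also have "\<dots> = exp (- x - (1/2) * y)" by (simp add: exp_add[symmetric])
    also have "\<dots> \<le> exp (-(1/2) * z - (1/2) * x)" using zxy by simp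
    also have "\<dots> = T * exp (-(1/2) * x)" unfolding T_def by (simp add: exp_add[symmetric])
    also have "exp (-(1/2) * x) \<le> W t / (3*SW)"
    proof -
      have "exp (-(1/2) * x) * (1 + (real_of_int \<bar>t\<bar>)^2) \<le> 1 / (3*SW)"
        unfolding x_def by (rule E4[OF tP])
      hence "exp (-(1/2) * x) \<le> 1 / (3*SW) / (1 + (real_of_int \<bar>t\<bar>)^2)"
        by (subst pos_le_divide_eq) (auto simp: add_pos_nonneg)
      thus ?thesis unfolding W_def by (simp add: mult.commute)
    qed
    hence "T * exp (-(1/2) * x) \<le> T * (W t / (3*SW))" using Tpos by (intro mult_left_mono) auto
    finally show ?thesis by simp
  qed
  have cpos: "T / (3*SW) \<ge> 0" using Tpos SW_ge1 by simp
  have BL: "f summable_on UNIV \<and> norm (infsum f UNIV) \<le> sum h (D1 \<union> D2) + (T / (3*SW)) * SW"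
    by (rule bound_lemma) (use fin1 fin2 in1 in2 out cpos in auto)
  have "sum h (D1 \<union> D2) = sum h D1 + sum h D2" by (rule sum.union_disjoint[OF fin1 fin2 disj])
  also have "sum h D1 = real (card D1) * (2 * e1)" by (simp add: h_def)
  also have "sum h D2 = real (card D2) * (L * e2)"
  proof -
    have "sum h D2 = sum (\<lambda>_. L * e2) D2"
      by (rule sum.cong) (use disj in \<open>auto simp: h_def\<close>)
    thus ?thesis by simp
  qed
  also have "real (card D1) * (2 * e1) \<le> (2*N+1) * (2 * e1)"
    by (rule mult_right_mono[OF c1]) (simp add: e1_def)
  also have "real (card D2) * (L * e2) \<le> (2*P+1) * (L * e2)"
    by (rule mult_right_mono[OF c2]) (use Lp in \<open>simp add: e2_def\<close>)
  finally have sumb: "sum h (D1 \<union> D2) \<le> (2*N+1) * (2 * e1) + (2*P+1) * (L * e2)" by simp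
  have t1: "(2*N+1) * (2 * e1) \<le> T / 3"
  proof -
    have "6 * (2*N+1) \<le> exp (z/4)" using Ec1 zQ by (smt (verit) exp_le_cancel_iff divide_right_mono)
    hence "6 * (2*N+1) * e1 \<le> exp (z/4) * e1" by (simp add: e1_def)
    also have "exp (z/4) * e1 = T" unfolding e1_def T_def by (simp add: exp_add[symmetric])
    finally show ?thesis by (simp add: algebra_simps)
  qed
  have t2: "(2*P+1) * (L * e2) \<le> T / 3"
  proof -
    have "3 * (2*P+1) * L \<le> exp (z/2)" using Ec2 zQ by (smt (verit) exp_le_cancel_iff divide_right_mono)
    hence "3 * (2*P+1) * L * e2 \<le> exp (z/2) * e2" by (simp add: e2_def)
    also have "exp (z/2) * e2 = T" unfolding e2_def T_def by (simp add: exp_add[symmetric])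
    finally show ?thesis by (simp add: algebra_simps)
  qed
  have "zconv F G s = infsum f UNIV" unfolding zconv_def f_def by simp
  hence "norm (zconv F G s) \<le> T/3 + T/3 + T/3"
    using BL sumb t1 t2 SW_ge1 by simp
  also have "\<dots> = exp (- (1/2) * sqrt (\<bar>real_of_int s / A\<bar>))"
    unfolding T_def z_def S_def using Apos by (simp add: abs_divide)
  finally show ?thesis .
qed

end

context fixes t b e C S a d :: real

  assumes t: "t > 0" and b: "b > t*(1+e)" and b1: "b > 1" and e: "e > 0" and C: "C > 0" and S: "S > 0"
   and tb: "t < b" and a: "a > 0" "a < 1" and expo: "b*(-1+e) + t*(1+e)*(1-a) < -(b*t*(1+e)*a)"
begin
lemma as_BA: "eventually (\<lambda>M::real. M powr t * 16 \<le> (M powr b) powr t) at_top"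
  using t b1 by real_asymp
lemma as_NM: "eventually (\<lambda>M::real. 2 * M powr (t*(1+e)) \<le> M powr b) at_top"
  using b by real_asymp
lemma as_NQ: "eventually (\<lambda>M::real. M powr (t*(1+e)) * 4 \<le> (M powr b) powr (t*(1+e))) at_top"
  using b1 t e by real_asymp
lemma as_PQ: "eventually (\<lambda>M::real. (M powr b) powr (t*(1+e/2)) * 2 \<le> (M powr b) powr (t*(1+e))) at_top"
  using b1 t e by real_asymp
lemma as_c5: "eventually (\<lambda>M::real. 131072 * ((M powr b) powr t)^2 * exp (-(sqrt ((M powr b) powr (t*(1+e/2)) / (M powr b) powr t))/4) \<le> 1/(3*S)) at_top"
  using b1 t e S by real_asymp
lemma as_Ea: "eventually (\<lambda>M::real. exp (-(1/2)* sqrt ((M powr b/2)/M powr t)) * (1 + C * (M powr b) powr (-1+e) * (1 + ((M powr b) powr (t*(1+e/2)))^2)) * S \<le> (M powr b) powr (-d)) at_top"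
  using b1 t e S b C \<open>t < b\<close> by real_asymp
lemma as_Eb1: "eventually (\<lambda>M::real. exp (-(1/2)* sqrt (M powr (t*(1+e)) / M powr t)) * (1 + C * (M powr b) powr (-1+e) * (1 + ((M powr b) powr (t*(1+e/2)))^2)) * S \<le> ((M powr b) powr (t*(1+e))) powr (-a) / 3) at_top"
  using b1 t e S b C tb by real_asymp
lemma Eb2_gen: "k + n*(1-a) < -(q*a) \<Longrightarrow> k < -(q*a) \<Longrightarrow> 0 < a \<Longrightarrow> a < 1 \<Longrightarrow> n > 0 \<Longrightarrow> q > 0 \<Longrightarrow> eventually (\<lambda>M::real. C * M powr k * (2 + 4 * (M powr n) powr (1-a) / (1-a)) \<le> (M powr q) powr (-a) / 3) at_top"
  by real_asymp
lemma as_Eb2: "eventually (\<lambda>M::real. C * (M powr b) powr (-1+e) * (2 + 4 * (M powr (t*(1+e))) powr (1-a) / (1-a)) \<le> ((M powr b) powr (t*(1+e))) powr (-a) / 3) at_top"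
proof -
  have k2: "b*(-1+e) < -(b*t*(1+e)*a)"
  proof -
    have "0 \<le> t*(1+e)*(1-a)" using t e a by simp
    thus ?thesis using expo by linarith
  qed
  have ev: "eventually (\<lambda>M::real. C * M powr (b*(-1+e)) * (2 + 4 * (M powr (t*(1+e))) powr (1-a) / (1-a)) \<le> (M powr (b*(t*(1+e)))) powr (-a) / 3) at_top"
  proof (rule Eb2_gen)
    show "b * (-1+e) + t*(1+e)*(1-a) < -(b*(t*(1+e))*a)" using expo by (simp add: mult.assoc)
    show "b * (-1+e) < -(b*(t*(1+e))*a)" using k2 by (simp add: mult.assoc)
    show "t*(1+e) > 0" using t e by simp
    show "b*(t*(1+e)) > 0" using t e b1 by simp
  qed (use a in auto)
  show ?thesis
    using eventually_conj[OF ev eventually_gt_at_top[of 0]]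
    by eventually_elim (simp add: powr_powr)
qed
lemma as_Eb3: "eventually (\<lambda>M::real. exp (- sqrt ((M powr b) powr (t*(1+e/2)) / (M powr b) powr t)) * (2 + 4 * (M powr (t*(1+e))) powr (1-a) / (1-a)) \<le> ((M powr b) powr (t*(1+e))) powr (-a) / 3) at_top"
  using b1 t e S b C tb a by real_asymp
lemma as_Ec1: "eventually (\<lambda>M::real. 6 * (2 * M powr (t*(1+e)) + 1) \<le> exp (sqrt ((M powr b) powr (t*(1+e)) / (M powr b) powr t) / 4)) at_top"
  using b1 t e S b C tb a by real_asymp
lemma as_Ec2: "eventually (\<lambda>M::real. 3 * (2 * (M powr b) powr (t*(1+e/2)) + 1) * (1 + C * (M powr b) powr (-1+e) * (1 + ((M powr b) powr (t*(1+e/2)))^2)) \<le> exp (sqrt ((M powr b) powr (t*(1+e)) / (M powr b) powr t) / 2)) at_top"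
  using b1 t e S b C tb a by real_asymp
lemma as_P1: "eventually (\<lambda>M::real. (M powr b) powr (t*(1+e/2)) \<ge> 1) at_top"
  using b1 t e S b C tb a by real_asymp
end

theorem lemma7:
  fixes \<tau>2 b \<epsilon> C\<epsilon> :: real
  assumes "\<tau>2 \<ge> 2" and "b > \<tau>2" and "\<epsilon> > 0" and "C\<epsilon> > 0"
    and "(b * (1 - \<epsilon>) - \<tau>2 * (1 + \<epsilon>)^2) / (\<tau>2 * (b - 1) * (1 + \<epsilon>)) - \<epsilon> > 0"
  shows "\<exists>Mstar::real. \<forall>M::real. M \<ge> Mstar \<longrightarrow>
    (let M' = M powr b;
         \<delta> = (b * (1 - \<epsilon>) - \<tau>2 * (1 + \<epsilon>)^2) / (\<tau>2 * (b - 1) * (1 + \<epsilon>))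
     in \<forall>F G :: int \<Rightarrow> complex.
      (F 0 = 1 \<and>
       (\<forall>s. 1 \<le> \<bar>s\<bar> \<and> real_of_int \<bar>s\<bar> < M' \<longrightarrow> F s = 0) \<and>
       (\<forall>s. M' \<le> real_of_int \<bar>s\<bar> \<and> real_of_int \<bar>s\<bar> \<le> M' powr (\<tau>2 * (1 + \<epsilon>/2)) \<longrightarrow>
            norm (F s) \<le> C\<epsilon> * M' powr (-1 + \<epsilon>)) \<and>
       (\<forall>s. real_of_int \<bar>s\<bar> \<ge> M' powr (\<tau>2 * (1 + \<epsilon>/2)) \<longrightarrow>
            norm (F s) \<le> exp (- sqrt (\<bar>real_of_int s / M' powr \<tau>2\<bar>))) \<and>
       norm (G 0) \<le> 2 \<and>
       (\<forall>s. 0 < \<bar>s\<bar> \<and> real_of_int \<bar>s\<bar> \<le> M powr (\<tau>2 * (1 + \<epsilon>)) \<longrightarrow>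
            norm (G s) \<le> 2 * real_of_int \<bar>s\<bar> powr (-\<delta> + \<epsilon>)) \<and>
       (\<forall>s. real_of_int \<bar>s\<bar> \<ge> M powr (\<tau>2 * (1 + \<epsilon>)) \<longrightarrow>
            norm (G s) \<le> exp (- (1/2) * sqrt (\<bar>real_of_int s / M powr \<tau>2\<bar>))))
      \<longrightarrow>
      (\<forall>s. real_of_int \<bar>s\<bar> \<le> M powr (\<tau>2 * (1 + \<epsilon>)) \<longrightarrow>
            norm (zconv F G s - G s) \<le> M' powr (-\<delta>)) \<and>
      (\<forall>s. M powr (\<tau>2 * (1 + \<epsilon>)) < real_of_int \<bar>s\<bar> \<and> real_of_int \<bar>s\<bar> \<le> M' powr (\<tau>2 * (1 + \<epsilon>)) \<longrightarrow>
            norm (zconv F G s) \<le> real_of_int \<bar>s\<bar> powr (-\<delta> + \<epsilon>)) \<and>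
      (\<forall>s. real_of_int \<bar>s\<bar> > M' powr (\<tau>2 * (1 + \<epsilon>)) \<longrightarrow>
            norm (zconv F G s) \<le> exp (- (1/2) * sqrt (\<bar>real_of_int s / M' powr \<tau>2\<bar>))))"
proof -
  note t2 = assms(1) and bt = assms(2) and ep = assms(3) and Cp = assms(4)
  define num where "num = b * (1 - \<epsilon>) - \<tau>2 * (1 + \<epsilon>)^2"
  define den where "den = \<tau>2 * (b - 1) * (1 + \<epsilon>)"
  define \<delta> where "\<delta> = num / den"
  define a where "a = \<delta> - \<epsilon>"
  have tpos: "0 < \<tau>2" using t2 by simp
  have b1: "1 < b" using t2 bt by simp
  have denp: "den > 0" unfolding den_def using tpos b1 ep by simp
  have key: "\<delta> * den = num" unfolding \<delta>_def using denp by simp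
  have apos: "0 < a" using assms(5) unfolding a_def \<delta>_def num_def den_def by simp
  have numpos: "num > \<epsilon> * den"
  proof -
    have "\<epsilon> < \<delta>" using apos a_def by simp
    hence "\<epsilon> * den < \<delta> * den" using denp by simp
    thus ?thesis using key by simp
  qed
  have numpos': "num > 0" using numpos ep denp by (smt (verit) mult_pos_pos)
  have e1: "\<epsilon> < 1"
  proof (rule ccontr)
    assume "\<not> \<epsilon> < 1"
    hence "b * (1 - \<epsilon>) \<le> 0" using b1 by (simp add: mult_nonneg_nonpos)
    moreover have "\<tau>2 * (1 + \<epsilon>)^2 \<ge> 0" using tpos by simp
    ultimately show False using numpos' unfolding num_def by linarith
  qed
  have sq: "\<tau>2 * (1 + \<epsilon>) \<le> \<tau>2 * (1 + \<epsilon>)^2"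
    using tpos ep by (simp add: power2_eq_square)
  have bbig: "\<tau>2 * (1 + \<epsilon>) < b"
  proof -
    have "b * (1 - \<epsilon>) \<le> b" using ep b1 by (simp add: algebra_simps)
    thus ?thesis using numpos' sq unfolding num_def by linarith
  qed
  have tb: "\<tau>2 < b" using bt .
  have a1: "a < 1"
  proof -
    have "num < den"
    proof -
      have "2 * (b - 1) * (1 + \<epsilon>) \<le> den" unfolding den_def using t2 b1 ep
        by (intro mult_right_mono) auto
      moreover have "b \<le> 2 * (b - 1)" using bt t2 by simp
      moreover have "2 * (b - 1) \<le> 2 * (b - 1) * (1 + \<epsilon>)" using b1 ep by simp
      moreover have "num < b" unfolding num_def using ep b1 tpos
        by (smt (verit) mult_pos_pos zero_less_power mult_le_cancel_left1)
      ultimately show ?thesis by linarith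
    qed
    hence "\<delta> < 1" unfolding \<delta>_def using denp by simp
    thus ?thesis unfolding a_def using ep by simp
  qed
  have expo: "b*(-1+\<epsilon>) + \<tau>2*(1+\<epsilon>)*(1-a) < -(b*\<tau>2*(1+\<epsilon>)*a)"
  proof -
    have "b*(-1+\<epsilon>) + \<tau>2*(1+\<epsilon>)*(1-a) + b*\<tau>2*(1+\<epsilon>)*a
        = b*(-1+\<epsilon>) + \<tau>2*(1+\<epsilon>)*(1+\<epsilon>) + \<delta> * den - b*\<tau>2*(1+\<epsilon>)*\<epsilon>"
      unfolding a_def den_def by (simp add: algebra_simps)
    also have "\<dots> = - (\<epsilon> * b * \<tau>2 * (1+\<epsilon>))"
      unfolding key num_def by (simp add: algebra_simps power2_eq_square)
    also have "\<dots> < 0" using ep b1 tpos by simp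
    finally show ?thesis by linarith
  qed
  have SWp: "SW > 0" using SW_ge1 by simp
  note H = tpos bbig b1 ep Cp SWp tb apos a1 expo
  have ev: "eventually (\<lambda>M::real. M > 0 \<and>
      M powr \<tau>2 * 16 \<le> (M powr b) powr \<tau>2 \<and>
      2 * M powr (\<tau>2*(1+\<epsilon>)) \<le> M powr b \<and>
      M powr (\<tau>2*(1+\<epsilon>)) * 4 \<le> (M powr b) powr (\<tau>2*(1+\<epsilon>)) \<and>
      (M powr b) powr (\<tau>2*(1+\<epsilon>/2)) * 2 \<le> (M powr b) powr (\<tau>2*(1+\<epsilon>)) \<and>
      131072 * ((M powr b) powr \<tau>2)^2 * exp (-(sqrt ((M powr b) powr (\<tau>2*(1+\<epsilon>/2)) / (M powr b) powr \<tau>2))/4) \<le> 1/(3*SW) \<and>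
      exp (-(1/2)* sqrt ((M powr b/2)/M powr \<tau>2)) * (1 + C\<epsilon> * (M powr b) powr (-1+\<epsilon>) * (1 + ((M powr b) powr (\<tau>2*(1+\<epsilon>/2)))^2)) * SW \<le> (M powr b) powr (-\<delta>) \<and>
      exp (-(1/2)* sqrt (M powr (\<tau>2*(1+\<epsilon>)) / M powr \<tau>2)) * (1 + C\<epsilon> * (M powr b) powr (-1+\<epsilon>) * (1 + ((M powr b) powr (\<tau>2*(1+\<epsilon>/2)))^2)) * SW \<le> ((M powr b) powr (\<tau>2*(1+\<epsilon>))) powr (-a) / 3 \<and>
      C\<epsilon> * (M powr b) powr (-1+\<epsilon>) * (2 + 4 * (M powr (\<tau>2*(1+\<epsilon>))) powr (1-a) / (1-a)) \<le> ((M powr b) powr (\<tau>2*(1+\<epsilon>))) powr (-a) / 3 \<and>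
      exp (- sqrt ((M powr b) powr (\<tau>2*(1+\<epsilon>/2)) / (M powr b) powr \<tau>2)) * (2 + 4 * (M powr (\<tau>2*(1+\<epsilon>))) powr (1-a) / (1-a)) \<le> ((M powr b) powr (\<tau>2*(1+\<epsilon>))) powr (-a) / 3 \<and>
      6 * (2 * M powr (\<tau>2*(1+\<epsilon>)) + 1) \<le> exp (sqrt ((M powr b) powr (\<tau>2*(1+\<epsilon>)) / (M powr b) powr \<tau>2) / 4) \<and>
      3 * (2 * (M powr b) powr (\<tau>2*(1+\<epsilon>/2)) + 1) * (1 + C\<epsilon> * (M powr b) powr (-1+\<epsilon>) * (1 + ((M powr b) powr (\<tau>2*(1+\<epsilon>/2)))^2)) \<le> exp (sqrt ((M powr b) powr (\<tau>2*(1+\<epsilon>)) / (M powr b) powr \<tau>2) / 2) \<and>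
      (M powr b) powr (\<tau>2*(1+\<epsilon>/2)) \<ge> 1) at_top"
    using eventually_gt_at_top[of 0] as_BA[OF H] as_NM[OF H] as_NQ[OF H] as_PQ[OF H] as_c5[OF H]
      as_Ea[OF H, of \<delta>] as_Eb1[OF H] as_Eb2[OF H] as_Eb3[OF H] as_Ec1[OF H] as_Ec2[OF H] as_P1[OF H]
    by eventually_elim blast
  then obtain Mstar where MS: "\<And>M. M \<ge> Mstar \<Longrightarrow> M > 0 \<and>
      M powr \<tau>2 * 16 \<le> (M powr b) powr \<tau>2 \<and>
      2 * M powr (\<tau>2*(1+\<epsilon>)) \<le> M powr b \<and>
      M powr (\<tau>2*(1+\<epsilon>)) * 4 \<le> (M powr b) powr (\<tau>2*(1+\<epsilon>)) \<and>
      (M powr b) powr (\<tau>2*(1+\<epsilon>/2)) * 2 \<le> (M powr b) powr (\<tau>2*(1+\<epsilon>)) \<and>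
      131072 * ((M powr b) powr \<tau>2)^2 * exp (-(sqrt ((M powr b) powr (\<tau>2*(1+\<epsilon>/2)) / (M powr b) powr \<tau>2))/4) \<le> 1/(3*SW) \<and>
      exp (-(1/2)* sqrt ((M powr b/2)/M powr \<tau>2)) * (1 + C\<epsilon> * (M powr b) powr (-1+\<epsilon>) * (1 + ((M powr b) powr (\<tau>2*(1+\<epsilon>/2)))^2)) * SW \<le> (M powr b) powr (-\<delta>) \<and>
      exp (-(1/2)* sqrt (M powr (\<tau>2*(1+\<epsilon>)) / M powr \<tau>2)) * (1 + C\<epsilon> * (M powr b) powr (-1+\<epsilon>) * (1 + ((M powr b) powr (\<tau>2*(1+\<epsilon>/2)))^2)) * SW \<le> ((M powr b) powr (\<tau>2*(1+\<epsilon>))) powr (-a) / 3 \<and>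
      C\<epsilon> * (M powr b) powr (-1+\<epsilon>) * (2 + 4 * (M powr (\<tau>2*(1+\<epsilon>))) powr (1-a) / (1-a)) \<le> ((M powr b) powr (\<tau>2*(1+\<epsilon>))) powr (-a) / 3 \<and>
      exp (- sqrt ((M powr b) powr (\<tau>2*(1+\<epsilon>/2)) / (M powr b) powr \<tau>2)) * (2 + 4 * (M powr (\<tau>2*(1+\<epsilon>))) powr (1-a) / (1-a)) \<le> ((M powr b) powr (\<tau>2*(1+\<epsilon>))) powr (-a) / 3 \<and>
      6 * (2 * M powr (\<tau>2*(1+\<epsilon>)) + 1) \<le> exp (sqrt ((M powr b) powr (\<tau>2*(1+\<epsilon>)) / (M powr b) powr \<tau>2) / 4) \<and>
      3 * (2 * (M powr b) powr (\<tau>2*(1+\<epsilon>/2)) + 1) * (1 + C\<epsilon> * (M powr b) powr (-1+\<epsilon>) * (1 + ((M powr b) powr (\<tau>2*(1+\<epsilon>/2)))^2)) \<le> exp (sqrt ((M powr b) powr (\<tau>2*(1+\<epsilon>)) / (M powr b) powr \<tau>2) / 2) \<and>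
      (M powr b) powr (\<tau>2*(1+\<epsilon>/2)) \<ge> 1"
    unfolding eventually_at_top_linorder by blast
  have ad: "-\<delta> + \<epsilon> = -a" unfolding a_def by simp
  show ?thesis
  proof (intro exI allI impI)
    fix M :: real
    assume "M \<ge> Mstar"
    note C = MS[OF this]
    have Mp: "M > 0" using C by blast
    have cBA: "M powr \<tau>2 * 16 \<le> (M powr b) powr \<tau>2" using C by blast
    have cNM: "2 * M powr (\<tau>2*(1+\<epsilon>)) \<le> M powr b" using C by blast
    have cNQ: "M powr (\<tau>2*(1+\<epsilon>)) * 4 \<le> (M powr b) powr (\<tau>2*(1+\<epsilon>))" using C by blast
    have cPQ: "(M powr b) powr (\<tau>2*(1+\<epsilon>/2)) * 2 \<le> (M powr b) powr (\<tau>2*(1+\<epsilon>))" using C by blast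
    have c5: "131072 * ((M powr b) powr \<tau>2)^2 * exp (-(sqrt ((M powr b) powr (\<tau>2*(1+\<epsilon>/2)) / (M powr b) powr \<tau>2))/4) \<le> 1/(3*SW)" using C by blast
    have cEa: "exp (-(1/2)* sqrt ((M powr b/2)/M powr \<tau>2)) * (1 + C\<epsilon> * (M powr b) powr (-1+\<epsilon>) * (1 + ((M powr b) powr (\<tau>2*(1+\<epsilon>/2)))^2)) * SW \<le> (M powr b) powr (-\<delta>)" using C by blast
    have cEb1: "exp (-(1/2)* sqrt (M powr (\<tau>2*(1+\<epsilon>)) / M powr \<tau>2)) * (1 + C\<epsilon> * (M powr b) powr (-1+\<epsilon>) * (1 + ((M powr b) powr (\<tau>2*(1+\<epsilon>/2)))^2)) * SW \<le> ((M powr b) powr (\<tau>2*(1+\<epsilon>))) powr (-a) / 3" using C by blast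
    have cEb2: "C\<epsilon> * (M powr b) powr (-1+\<epsilon>) * (2 + 4 * (M powr (\<tau>2*(1+\<epsilon>))) powr (1-a) / (1-a)) \<le> ((M powr b) powr (\<tau>2*(1+\<epsilon>))) powr (-a) / 3" using C by blast
    have cEb3: "exp (- sqrt ((M powr b) powr (\<tau>2*(1+\<epsilon>/2)) / (M powr b) powr \<tau>2)) * (2 + 4 * (M powr (\<tau>2*(1+\<epsilon>))) powr (1-a) / (1-a)) \<le> ((M powr b) powr (\<tau>2*(1+\<epsilon>))) powr (-a) / 3" using C by blast
    have cEc1: "6 * (2 * M powr (\<tau>2*(1+\<epsilon>)) + 1) \<le> exp (sqrt ((M powr b) powr (\<tau>2*(1+\<epsilon>)) / (M powr b) powr \<tau>2) / 4)" using C by blast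
    have cEc2: "3 * (2 * (M powr b) powr (\<tau>2*(1+\<epsilon>/2)) + 1) * (1 + C\<epsilon> * (M powr b) powr (-1+\<epsilon>) * (1 + ((M powr b) powr (\<tau>2*(1+\<epsilon>/2)))^2)) \<le> exp (sqrt ((M powr b) powr (\<tau>2*(1+\<epsilon>)) / (M powr b) powr \<tau>2) / 2)" using C by blast
    have cP1: "(M powr b) powr (\<tau>2*(1+\<epsilon>/2)) \<ge> 1" using C by blast
    have Bpos: "0 < M powr \<tau>2" using Mp by simp
    have Npos: "0 < M powr (\<tau>2*(1+\<epsilon>))" using Mp by simp
    have Kpos: "0 \<le> C\<epsilon> * (M powr b) powr (-1+\<epsilon>)" using Cp by simp
    have Ppos: "0 < (M powr b) powr (\<tau>2*(1+\<epsilon>/2))" using cP1 by linarith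
    have Apos: "0 < (M powr b) powr \<tau>2" using Mp by simp
    have E4: "\<And>x. x \<ge> (M powr b) powr (\<tau>2*(1+\<epsilon>/2)) \<Longrightarrow>
        exp (-(1/2) * sqrt (x/((M powr b) powr \<tau>2))) * (1 + x^2) \<le> 1 / (3*SW)"
      by (rule E4_from[OF Apos cP1 c5])
    show "let M' = M powr b;
         \<delta> = (b * (1 - \<epsilon>) - \<tau>2 * (1 + \<epsilon>)^2) / (\<tau>2 * (b - 1) * (1 + \<epsilon>))
     in \<forall>F G :: int \<Rightarrow> complex.
      (F 0 = 1 \<and>
       (\<forall>s. 1 \<le> \<bar>s\<bar> \<and> real_of_int \<bar>s\<bar> < M' \<longrightarrow> F s = 0) \<and>
       (\<forall>s. M' \<le> real_of_int \<bar>s\<bar> \<and> real_of_int \<bar>s\<bar> \<le> M' powr (\<tau>2 * (1 + \<epsilon>/2)) \<longrightarrow>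
            norm (F s) \<le> C\<epsilon> * M' powr (-1 + \<epsilon>)) \<and>
       (\<forall>s. real_of_int \<bar>s\<bar> \<ge> M' powr (\<tau>2 * (1 + \<epsilon>/2)) \<longrightarrow>
            norm (F s) \<le> exp (- sqrt (\<bar>real_of_int s / M' powr \<tau>2\<bar>))) \<and>
       norm (G 0) \<le> 2 \<and>
       (\<forall>s. 0 < \<bar>s\<bar> \<and> real_of_int \<bar>s\<bar> \<le> M powr (\<tau>2 * (1 + \<epsilon>)) \<longrightarrow>
            norm (G s) \<le> 2 * real_of_int \<bar>s\<bar> powr (-\<delta> + \<epsilon>)) \<and>
       (\<forall>s. real_of_int \<bar>s\<bar> \<ge> M powr (\<tau>2 * (1 + \<epsilon>)) \<longrightarrow>
            norm (G s) \<le> exp (- (1/2) * sqrt (\<bar>real_of_int s / M powr \<tau>2\<bar>))))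
      \<longrightarrow>
      (\<forall>s. real_of_int \<bar>s\<bar> \<le> M powr (\<tau>2 * (1 + \<epsilon>)) \<longrightarrow>
            norm (zconv F G s - G s) \<le> M' powr (-\<delta>)) \<and>
      (\<forall>s. M powr (\<tau>2 * (1 + \<epsilon>)) < real_of_int \<bar>s\<bar> \<and> real_of_int \<bar>s\<bar> \<le> M' powr (\<tau>2 * (1 + \<epsilon>)) \<longrightarrow>
            norm (zconv F G s) \<le> real_of_int \<bar>s\<bar> powr (-\<delta> + \<epsilon>)) \<and>
      (\<forall>s. real_of_int \<bar>s\<bar> > M' powr (\<tau>2 * (1 + \<epsilon>)) \<longrightarrow>
            norm (zconv F G s) \<le> exp (- (1/2) * sqrt (\<bar>real_of_int s / M' powr \<tau>2\<bar>)))"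
      unfolding Let_def num_def[symmetric] den_def[symmetric] \<delta>_def[symmetric] ad
    proof (intro allI impI)
      fix F G :: "int \<Rightarrow> complex"
      assume hyp: "F 0 = 1 \<and>
       (\<forall>s. 1 \<le> \<bar>s\<bar> \<and> real_of_int \<bar>s\<bar> < M powr b \<longrightarrow> F s = 0) \<and>
       (\<forall>s. M powr b \<le> real_of_int \<bar>s\<bar> \<and> real_of_int \<bar>s\<bar> \<le> (M powr b) powr (\<tau>2 * (1 + \<epsilon>/2)) \<longrightarrow>
            norm (F s) \<le> C\<epsilon> * (M powr b) powr (-1 + \<epsilon>)) \<and>
       (\<forall>s. real_of_int \<bar>s\<bar> \<ge> (M powr b) powr (\<tau>2 * (1 + \<epsilon>/2)) \<longrightarrow>
            norm (F s) \<le> exp (- sqrt (\<bar>real_of_int s / (M powr b) powr \<tau>2\<bar>))) \<and>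
       norm (G 0) \<le> 2 \<and>
       (\<forall>s. 0 < \<bar>s\<bar> \<and> real_of_int \<bar>s\<bar> \<le> M powr (\<tau>2 * (1 + \<epsilon>)) \<longrightarrow>
            norm (G s) \<le> 2 * real_of_int \<bar>s\<bar> powr (-a)) \<and>
       (\<forall>s. real_of_int \<bar>s\<bar> \<ge> M powr (\<tau>2 * (1 + \<epsilon>)) \<longrightarrow>
            norm (G s) \<le> exp (- (1/2) * sqrt (\<bar>real_of_int s / M powr \<tau>2\<bar>)))"
      have HF0: "F 0 = 1" using hyp by blast
      have HF1: "\<And>s. 1 \<le> \<bar>s\<bar> \<and> real_of_int \<bar>s\<bar> < M powr b \<Longrightarrow> F s = 0" using hyp by blast
      have HF2: "\<And>s. M powr b \<le> real_of_int \<bar>s\<bar> \<and> real_of_int \<bar>s\<bar> \<le> (M powr b) powr (\<tau>2 * (1 + \<epsilon>/2)) \<Longrightarrow>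
            norm (F s) \<le> C\<epsilon> * (M powr b) powr (-1 + \<epsilon>)" using hyp by blast
      have HF3: "\<And>s. real_of_int \<bar>s\<bar> \<ge> (M powr b) powr (\<tau>2 * (1 + \<epsilon>/2)) \<Longrightarrow>
            norm (F s) \<le> exp (- sqrt (\<bar>real_of_int s / (M powr b) powr \<tau>2\<bar>))" using hyp by blast
      have HG0: "norm (G 0) \<le> 2" using hyp by blast
      have HG1: "\<And>s. 0 < \<bar>s\<bar> \<and> real_of_int \<bar>s\<bar> \<le> M powr (\<tau>2 * (1 + \<epsilon>)) \<Longrightarrow>
            norm (G s) \<le> 2 * real_of_int \<bar>s\<bar> powr (-a)" using hyp by blast
      have HG2: "\<And>s. real_of_int \<bar>s\<bar> \<ge> M powr (\<tau>2 * (1 + \<epsilon>)) \<Longrightarrow>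
            norm (G s) \<le> exp (- (1/2) * sqrt (\<bar>real_of_int s / M powr \<tau>2\<bar>))" using hyp by blast
      note CTX = Bpos cBA Npos cNM cNQ cPQ Kpos apos a1 Ppos E4 HF0 HF1 HF2 HF3 HG0 HG1 HG2
      show "(\<forall>s. real_of_int \<bar>s\<bar> \<le> M powr (\<tau>2 * (1 + \<epsilon>)) \<longrightarrow>
            norm (zconv F G s - G s) \<le> (M powr b) powr (-\<delta>)) \<and>
      (\<forall>s. M powr (\<tau>2 * (1 + \<epsilon>)) < real_of_int \<bar>s\<bar> \<and> real_of_int \<bar>s\<bar> \<le> (M powr b) powr (\<tau>2 * (1 + \<epsilon>)) \<longrightarrow>
            norm (zconv F G s) \<le> real_of_int \<bar>s\<bar> powr (-a)) \<and>
      (\<forall>s. real_of_int \<bar>s\<bar> > (M powr b) powr (\<tau>2 * (1 + \<epsilon>)) \<longrightarrow>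
            norm (zconv F G s) \<le> exp (- (1/2) * sqrt (\<bar>real_of_int s / (M powr b) powr \<tau>2\<bar>)))"
      proof (intro conjI allI impI)
        fix s assume s: "real_of_int \<bar>s\<bar> \<le> M powr (\<tau>2 * (1 + \<epsilon>))"
        show "norm (zconv F G s - G s) \<le> (M powr b) powr (-\<delta>)"
          by (rule partA[OF CTX _ s]) (use cEa in \<open>simp_all add: Lc_def\<close>)
      next
        fix s assume s: "M powr (\<tau>2 * (1 + \<epsilon>)) < real_of_int \<bar>s\<bar> \<and> real_of_int \<bar>s\<bar> \<le> (M powr b) powr (\<tau>2 * (1 + \<epsilon>))"
        show "norm (zconv F G s) \<le> real_of_int \<bar>s\<bar> powr (-a)"
          by (rule partB[OF CTX _ cEb2 cEb3]) (use cEb1 s in \<open>simp_all add: Lc_def\<close>)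
      next
        fix s assume s: "real_of_int \<bar>s\<bar> > (M powr b) powr (\<tau>2 * (1 + \<epsilon>))"
        show "norm (zconv F G s) \<le> exp (- (1/2) * sqrt (\<bar>real_of_int s / (M powr b) powr \<tau>2\<bar>))"
          by (rule partC[OF CTX cEc1 _ s]) (use cEc2 in \<open>simp_all add: Lc_def\<close>)
      qed
    qed
  qed
qed


end
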